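(* Let $P$ be a poset and $n>1$ an integer. Then for every element $a_0$ of $\mathrm{id}^n(P)$ that is not compact, there is a chain $a_0<a_1<\dots<a_{n-1}$ in $\mathrm{id}^n(P)$ where, for each $i=1,\dots,n-1$, $a_i$ is the least $i$-compact element of $\mathrm{id}^n(P)$ majorizing $a_{i-1}$ (in particular, such a least element exists).
   Context: For a poset $P$, an ideal of $P$ is an upward directed downset of $P$ (downset: $x\le y\in d\Rightarrow x\in d$; upward directed: every two elements have a common upper bound in the set). $\mathrm{id}(P)$ is the set of nonempty ideals of $P$ ordered by inclusion, and $\mathrm{id}^n$ denotes the $n$-fold iterate of this construction. An element $x$ of a poset $Q$ is compact if for every upward directed subset $D\subseteq Q$ which has a least upper bound $\bigvee D$ in $Q$ with $\bigvee D\ge x$, some $y\in D$ satisfies $y\ge x$. The $1$-compact elements of $Q$ are its compact elements; inductively, for $n\ge2$, the $n$-compact elements of $Q$ are those $(n-1)$-compact elements of $Q$ which are compact in the subposet of $(n-1)$-compact elements of $Q$. *)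

theory Defs
  imports Main
begin

text \<open>Posets are given by a carrier set together with an order relation
  (only its restriction to the carrier matters).\<close>

definition partial_order_on' :: "'a set \<Rightarrow> ('a \<Rightarrow> 'a \<Rightarrow> bool) \<Rightarrow> bool" where
  "partial_order_on' A le \<longleftrightarrow>
     (\<forall>x\<in>A. le x x) \<and>
     (\<forall>x\<in>A. \<forall>y\<in>A. le x y \<and> le y x \<longrightarrow> x = y) \<and>
     (\<forall>x\<in>A. \<forall>y\<in>A. \<forall>z\<in>A. le x y \<and> le y z \<longrightarrow> le x z)"

definition up_directed :: "'a set \<Rightarrow> ('a \<Rightarrow> 'a \<Rightarrow> bool) \<Rightarrow> bool" where
  "up_directed D le \<longleftrightarrow> (\<forall>x\<in>D. \<forall>y\<in>D. \<exists>z\<in>D. le x z \<and> le y z)"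

definition downset :: "'a set \<Rightarrow> ('a \<Rightarrow> 'a \<Rightarrow> bool) \<Rightarrow> 'a set \<Rightarrow> bool" where
  "downset A le d \<longleftrightarrow> d \<subseteq> A \<and> (\<forall>x\<in>A. \<forall>y\<in>d. le x y \<longrightarrow> x \<in> d)"

text \<open>The nonempty ideals of the poset (A, le); id(A) is ordered by inclusion.\<close>
definition ideals :: "'a set \<Rightarrow> ('a \<Rightarrow> 'a \<Rightarrow> bool) \<Rightarrow> 'a set set" where
  "ideals A le = {d. d \<noteq> {} \<and> downset A le d \<and> up_directed d le}"

definition order_iso :: "'a set \<Rightarrow> ('a \<Rightarrow> 'a \<Rightarrow> bool) \<Rightarrow> 'b set \<Rightarrow> ('b \<Rightarrow> 'b \<Rightarrow> bool) \<Rightarrow> bool" where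
  "order_iso A leA B leB \<longleftrightarrow>
     (\<exists>f. bij_betw f A B \<and> (\<forall>x\<in>A. \<forall>y\<in>A. leA x y \<longleftrightarrow> leB (f x) (f y)))"

text \<open>is_id_iter n P le Q leQ: the poset (Q, leQ) is isomorphic to id^n(P, le).
  The intermediate iterates are represented (up to isomorphism) in the type of Q.\<close>
fun is_id_iter :: "nat \<Rightarrow> 'a set \<Rightarrow> ('a \<Rightarrow> 'a \<Rightarrow> bool) \<Rightarrow> 'u set \<Rightarrow> ('u \<Rightarrow> 'u \<Rightarrow> bool) \<Rightarrow> bool" where
  "is_id_iter 0 P le Q leQ \<longleftrightarrow> order_iso P le Q leQ"
| "is_id_iter (Suc n) P le Q leQ \<longleftrightarrow>
     (\<exists>R leR. is_id_iter n P le R leR \<and> order_iso (ideals R leR) (\<subseteq>) Q leQ)"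

definition is_lub :: "'a set \<Rightarrow> ('a \<Rightarrow> 'a \<Rightarrow> bool) \<Rightarrow> 'a set \<Rightarrow> 'a \<Rightarrow> bool" where
  "is_lub A le D s \<longleftrightarrow> s \<in> A \<and> (\<forall>d\<in>D. le d s) \<and> (\<forall>u\<in>A. (\<forall>d\<in>D. le d u) \<longrightarrow> le s u)"

text \<open>Compact elements (directed sets are taken nonempty, as usual).\<close>
definition compact_el :: "'a set \<Rightarrow> ('a \<Rightarrow> 'a \<Rightarrow> bool) \<Rightarrow> 'a \<Rightarrow> bool" where
  "compact_el A le x \<longleftrightarrow> x \<in> A \<and>
     (\<forall>D. D \<subseteq> A \<and> D \<noteq> {} \<and> up_directed D le \<longrightarrow>
        (\<forall>s. is_lub A le D s \<and> le x s \<longrightarrow> (\<exists>y\<in>D. le x y)))"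

fun kcompact :: "'a set \<Rightarrow> ('a \<Rightarrow> 'a \<Rightarrow> bool) \<Rightarrow> nat \<Rightarrow> 'a set" where
  "kcompact A le 0 = A"
| "kcompact A le (Suc k) = {x. compact_el (kcompact A le k) le x}"

definition is_least :: "'a set \<Rightarrow> ('a \<Rightarrow> 'a \<Rightarrow> bool) \<Rightarrow> 'a \<Rightarrow> bool" where
  "is_least S le x \<longleftrightarrow> x \<in> S \<and> (\<forall>y\<in>S. le x y)"

end

theory Submission
  imports Defs
begin

definition iso_fn :: "('a \<Rightarrow> 'b) \<Rightarrow> 'a set \<Rightarrow> ('a \<Rightarrow> 'a \<Rightarrow> bool) \<Rightarrow> 'b set \<Rightarrow> ('b \<Rightarrow> 'b \<Rightarrow> bool) \<Rightarrow> bool" where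
  "iso_fn f A le B le' \<longleftrightarrow> bij_betw f A B \<and> (\<forall>x\<in>A. \<forall>y\<in>A. le x y \<longleftrightarrow> le' (f x) (f y))"

lemma order_iso_fn: "order_iso A le B le' \<longleftrightarrow> (\<exists>f. iso_fn f A le B le')"
  unfolding order_iso_def iso_fn_def by simp

lemma iso_fn_inv:
  assumes "iso_fn f A le B le'"
  shows "iso_fn (the_inv_into A f) B le' A le"
proof -
  have b: "bij_betw f A B" and o: "\<forall>x\<in>A. \<forall>y\<in>A. le x y \<longleftrightarrow> le' (f x) (f y)"
    using assms unfolding iso_fn_def by auto
  have bi: "bij_betw (the_inv_into A f) B A" by (rule bij_betw_the_inv_into[OF b])
  have ff: "\<And>y. y \<in> B \<Longrightarrow> f (the_inv_into A f y) = y"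
    using b by (simp add: bij_betw_def f_the_inv_into_f)
  have "\<forall>x\<in>B. \<forall>y\<in>B. le' x y \<longleftrightarrow> le (the_inv_into A f x) (the_inv_into A f y)"
  proof (intro ballI)
    fix x y assume x: "x \<in> B" and y: "y \<in> B"
    have "the_inv_into A f x \<in> A" "the_inv_into A f y \<in> A" using bi x y bij_betwE by blast+
    then show "le' x y \<longleftrightarrow> le (the_inv_into A f x) (the_inv_into A f y)"
      using o ff[OF x] ff[OF y] by metis
  qed
  then show ?thesis using bi unfolding iso_fn_def by auto
qed

lemma iso_fn_inv_ff:
  assumes "iso_fn f A le B le'" "x \<in> A" shows "the_inv_into A f (f x) = x"
  using assms unfolding iso_fn_def bij_betw_def by (simp add: the_inv_into_f_f)

lemma iso_fn_f_inv:
  assumes "iso_fn f A le B le'" "y \<in> B" shows "f (the_inv_into A f y) = y"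
  using assms unfolding iso_fn_def bij_betw_def by (simp add: f_the_inv_into_f)

lemma iso_fn_comp:
  assumes "iso_fn f A la B lb" "iso_fn g B lb C lc"
  shows "iso_fn (g \<circ> f) A la C lc"
  using assms unfolding iso_fn_def
  by (auto intro: bij_betw_trans dest: bij_betwE)

lemma iso_fn_restrict:
  assumes "iso_fn f A le B le'" "S \<subseteq> A"
  shows "iso_fn f S le (f ` S) le'"
  using assms unfolding iso_fn_def by (auto intro: bij_betw_subset)

lemma order_iso_sym: "order_iso A le B le' \<Longrightarrow> order_iso B le' A le"
  using iso_fn_inv order_iso_fn by metis

lemma order_iso_trans: "order_iso A la B lb \<Longrightarrow> order_iso B lb C lc \<Longrightarrow> order_iso A la C lc"
  using iso_fn_comp order_iso_fn by metis

lemma iso_fn_mem: "iso_fn f A le B le' \<Longrightarrow> x \<in> A \<Longrightarrow> f x \<in> B"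
  unfolding iso_fn_def using bij_betwE by blast

lemma iso_fn_img: "iso_fn f A le B le' \<Longrightarrow> f ` A = B"
  unfolding iso_fn_def bij_betw_def by blast

lemma iso_fn_le: "iso_fn f A le B le' \<Longrightarrow> x \<in> A \<Longrightarrow> y \<in> A \<Longrightarrow> le' (f x) (f y) \<longleftrightarrow> le x y"
  unfolding iso_fn_def by blast

lemma iso_fn_inj: "iso_fn f A le B le' \<Longrightarrow> x \<in> A \<Longrightarrow> y \<in> A \<Longrightarrow> f x = f y \<longleftrightarrow> x = y"
  unfolding iso_fn_def bij_betw_def inj_on_def by blast

lemma iso_up_directed:
  assumes "iso_fn f A le B le'" "D \<subseteq> A"
  shows "up_directed (f ` D) le' \<longleftrightarrow> up_directed D le"
  using assms unfolding up_directed_def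
  by (auto simp: iso_fn_le subset_iff)

lemma iso_is_lub:
  assumes i: "iso_fn f A le B le'" and D: "D \<subseteq> A" and s: "s \<in> A"
  shows "is_lub B le' (f ` D) (f s) \<longleftrightarrow> is_lub A le D s"
proof -
  have img: "f ` A = B" using iso_fn_img[OF i] .
  have "(\<forall>u\<in>B. (\<forall>d\<in>f ` D. le' d u) \<longrightarrow> le' (f s) u) \<longleftrightarrow>
        (\<forall>u\<in>A. (\<forall>d\<in>D. le d u) \<longrightarrow> le s u)"
    using img D s iso_fn_le[OF i] by (auto simp: subset_iff)
  moreover have "(\<forall>d\<in>f ` D. le' d (f s)) \<longleftrightarrow> (\<forall>d\<in>D. le d s)"
    using D s iso_fn_le[OF i] by auto
  ultimately show ?thesis unfolding is_lub_def using s iso_fn_mem[OF i] by auto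
qed


lemma iso_compact_fwd:
  assumes i: "iso_fn f A le B le'" and x: "x \<in> A" and c: "compact_el A le x"
  shows "compact_el B le' (f x)"
proof -
  define g where "g = the_inv_into A f"
  have gi: "iso_fn g B le' A le" unfolding g_def by (rule iso_fn_inv[OF i])
  have fg: "\<And>y. y \<in> B \<Longrightarrow> f (g y) = y" unfolding g_def by (rule iso_fn_f_inv[OF i])
  show ?thesis unfolding compact_el_def
  proof (intro conjI allI impI)
    show "f x \<in> B" using iso_fn_mem[OF i x] .
  next
    fix D' s' assume D': "D' \<subseteq> B \<and> D' \<noteq> {} \<and> up_directed D' le'"
      and s': "is_lub B le' D' s' \<and> le' (f x) s'"
    define D where "D = g ` D'"
    have DA: "D \<subseteq> A" unfolding D_def using D' iso_fn_mem[OF gi] by auto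
    have fD: "f ` D = D'" unfolding D_def using D' fg by (force simp: image_image)
    have sB: "s' \<in> B" using s' unfolding is_lub_def by auto
    have sA: "g s' \<in> A" using iso_fn_mem[OF gi sB] .
    have "up_directed D le" using iso_up_directed[OF i DA] fD D' by simp
    moreover have "D \<subseteq> A \<and> D \<noteq> {}" using DA D' unfolding D_def by auto
    moreover have "is_lub A le D (g s')" using iso_is_lub[OF i DA sA] fD fg[OF sB] s' by simp
    moreover have "le x (g s')" using iso_fn_le[OF i x sA] fg[OF sB] s' by simp
    ultimately obtain y where y: "y \<in> D" "le x y" using c x unfolding compact_el_def by blast
    then have "f y \<in> D'" "le' (f x) (f y)" using fD DA iso_fn_le[OF i x] by auto
    then show "\<exists>y\<in>D'. le' (f x) y" by blast
  qed
qed

lemma iso_compact: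
  assumes i: "iso_fn f A le B le'" and x: "x \<in> A"
  shows "compact_el B le' (f x) \<longleftrightarrow> compact_el A le x"
  using iso_compact_fwd[OF i x] iso_compact_fwd[OF iso_fn_inv[OF i] iso_fn_mem[OF i x]]
    iso_fn_inv_ff[OF i x] by auto

lemma compact_el_mem: "compact_el A le x \<Longrightarrow> x \<in> A"
  unfolding compact_el_def by simp

lemma kcompact_sub: "kcompact A le k \<subseteq> A"
  by (induction k) (auto dest: compact_el_mem)

lemma iso_kcompact:
  assumes i: "iso_fn f A le B le'"
  shows "f ` kcompact A le k = kcompact B le' k"
proof (induction k)
  case 0 then show ?case using iso_fn_img[OF i] by simp
next
  case (Suc k)
  let ?KA = "kcompact A le k"
  have ir: "iso_fn f ?KA le (kcompact B le' k) le'"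
    using iso_fn_restrict[OF i kcompact_sub, of le k] Suc by simp
  show ?case
  proof
    show "f ` kcompact A le (Suc k) \<subseteq> kcompact B le' (Suc k)"
    proof
      fix y assume "y \<in> f ` kcompact A le (Suc k)"
      then obtain x where x: "compact_el ?KA le x" "y = f x" by auto
      then show "y \<in> kcompact B le' (Suc k)" using iso_compact[OF ir compact_el_mem[OF x(1)]] by simp
    qed
  next
    show "kcompact B le' (Suc k) \<subseteq> f ` kcompact A le (Suc k)"
    proof
      fix y assume "y \<in> kcompact B le' (Suc k)"
      then have c: "compact_el (kcompact B le' k) le' y" by simp
      then have "y \<in> f ` ?KA" using compact_el_mem Suc by auto
      then obtain x where x: "x \<in> ?KA" "y = f x" by auto
      then show "y \<in> f ` kcompact A le (Suc k)" using iso_compact[OF ir x(1)] c by auto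
    qed
  qed
qed

lemma kcompact_shift: "kcompact A le (Suc k) = kcompact (kcompact A le 1) le k"
  by (induction k) auto

lemma is_id_iter_iso:
  fixes R C :: "'u set"
  assumes "is_id_iter n P le R leR" "order_iso R leR C leC"
  shows "is_id_iter n P le C leC"
proof (cases n)
  case 0 then show ?thesis using assms order_iso_trans[of P le R leR C leC] by simp
next
  case (Suc m)
  obtain R' :: "'u set" and leR' where r: "is_id_iter m P le R' leR'" "order_iso (ideals R' leR') (\<subseteq>) R leR"
    using assms(1) Suc by (simp only: is_id_iter.simps(2)) blast
  have "order_iso (ideals R' leR') (\<subseteq>) C leC" using order_iso_trans[OF r(2) assms(2)] .
  then show ?thesis using r(1) Suc by (simp only: is_id_iter.simps(2)) blast
qed

definition dcpo' :: "'a set \<Rightarrow> ('a \<Rightarrow> 'a \<Rightarrow> bool) \<Rightarrow> bool" where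
  "dcpo' A le \<longleftrightarrow> (\<forall>D. D \<subseteq> A \<and> D \<noteq> {} \<and> up_directed D le \<longrightarrow> (\<exists>s. is_lub A le D s))"

lemma mem_ideals: "I \<in> ideals R le \<longleftrightarrow> I \<noteq> {} \<and> I \<subseteq> R \<and> (\<forall>x\<in>R. \<forall>y\<in>I. le x y \<longrightarrow> x \<in> I)
   \<and> (\<forall>x\<in>I. \<forall>y\<in>I. \<exists>z\<in>I. le x z \<and> le y z)"
  unfolding ideals_def downset_def up_directed_def by auto

lemma ideals_po: "partial_order_on' (ideals R le) (\<subseteq>)"
  unfolding partial_order_on'_def by auto

lemma union_ideal:
  assumes "D \<subseteq> ideals R le" "D \<noteq> {}" "up_directed D (\<subseteq>)"
  shows "\<Union>D \<in> ideals R le"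
proof -
  have "\<forall>x\<in>\<Union>D. \<forall>y\<in>\<Union>D. \<exists>z\<in>\<Union>D. le x z \<and> le y z"
  proof (intro ballI)
    fix x y assume "x \<in> \<Union>D" "y \<in> \<Union>D"
    then obtain d1 d2 where "d1 \<in> D" "d2 \<in> D" "x \<in> d1" "y \<in> d2" by auto
    then obtain d3 where "d3 \<in> D" "d1 \<subseteq> d3" "d2 \<subseteq> d3" using assms(3) unfolding up_directed_def by blast
    then show "\<exists>z\<in>\<Union>D. le x z \<and> le y z" using assms(1) \<open>x \<in> d1\<close> \<open>y \<in> d2\<close>
      unfolding mem_ideals subset_iff by blast
  qed
  then show ?thesis using assms(1,2) unfolding mem_ideals subset_iff by blast
qed

lemma ideals_dcpo: "dcpo' (ideals R le) (\<subseteq>)"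
  unfolding dcpo'_def
proof (intro allI impI)
  fix D assume D: "D \<subseteq> ideals R le \<and> D \<noteq> {} \<and> up_directed D (\<subseteq>)"
  then have "is_lub (ideals R le) (\<subseteq>) D (\<Union>D)" unfolding is_lub_def using union_ideal by blast
  then show "\<exists>s. is_lub (ideals R le) (\<subseteq>) D s" by blast
qed

lemma iso_po:
  assumes i: "iso_fn f A le B le'" and p: "partial_order_on' A le"
  shows "partial_order_on' B le'"
proof -
  define g where "g = the_inv_into A f"
  have gi: "iso_fn g B le' A le" unfolding g_def by (rule iso_fn_inv[OF i])
  have l: "\<And>x y. x \<in> B \<Longrightarrow> y \<in> B \<Longrightarrow> le' x y \<longleftrightarrow> le (g x) (g y)"
    using iso_fn_le[OF gi] by blast
  have m: "\<And>x. x \<in> B \<Longrightarrow> g x \<in> A" using iso_fn_mem[OF gi] by blast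
  have j: "\<And>x y. x \<in> B \<Longrightarrow> y \<in> B \<Longrightarrow> g x = g y \<Longrightarrow> x = y"
    using iso_fn_inj[OF gi] by blast
  have r: "\<And>x. x \<in> A \<Longrightarrow> le x x" and a: "\<And>x y. x \<in> A \<Longrightarrow> y \<in> A \<Longrightarrow> le x y \<Longrightarrow> le y x \<Longrightarrow> x = y"
    and t: "\<And>x y z. x \<in> A \<Longrightarrow> y \<in> A \<Longrightarrow> z \<in> A \<Longrightarrow> le x y \<Longrightarrow> le y z \<Longrightarrow> le x z"
    using p unfolding partial_order_on'_def by blast+
  show ?thesis unfolding partial_order_on'_def
  proof (intro conjI ballI impI)
    fix x assume x: "x \<in> B" show "le' x x" using r[OF m[OF x]] l[OF x x] by simp
  next
    fix x y assume x: "x \<in> B" and y: "y \<in> B" and "le' x y \<and> le' y x"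
    then have "le (g x) (g y)" "le (g y) (g x)" using l by auto
    then show "x = y" using j[OF x y] a[OF m[OF x] m[OF y]] by simp
  next
    fix x y z assume x: "x \<in> B" and y: "y \<in> B" and z: "z \<in> B" and "le' x y \<and> le' y z"
    then have "le (g x) (g y)" "le (g y) (g z)" using l by auto
    then show "le' x z" using t[OF m[OF x] m[OF y] m[OF z]] l[OF x z] by simp
  qed
qed

lemma iso_dcpo:
  assumes i: "iso_fn f A le B le'" and p: "dcpo' A le"
  shows "dcpo' B le'"
  unfolding dcpo'_def
proof (intro allI impI)
  define g where "g = the_inv_into A f"
  have gi: "iso_fn g B le' A le" unfolding g_def by (rule iso_fn_inv[OF i])
  have fg: "\<And>y. y \<in> B \<Longrightarrow> f (g y) = y" unfolding g_def by (rule iso_fn_f_inv[OF i])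
  fix D' assume D': "D' \<subseteq> B \<and> D' \<noteq> {} \<and> up_directed D' le'"
  define D where "D = g ` D'"
  have DA: "D \<subseteq> A" unfolding D_def using D' iso_fn_mem[OF gi] by auto
  have fD: "f ` D = D'" unfolding D_def using D' fg by (force simp: image_image)
  have "up_directed D le" using iso_up_directed[OF i DA] fD D' by simp
  then obtain s where s: "is_lub A le D s" using p DA D' unfolding dcpo'_def D_def by blast
  then have "s \<in> A" unfolding is_lub_def by simp
  then have "is_lub B le' D' (f s)" using iso_is_lub[OF i DA] s fD by simp
  then show "\<exists>s. is_lub B le' D' s" by blast
qed

lemma is_id_iter_Suc_props:
  fixes R :: "'u set"
  assumes "is_id_iter (Suc m) P le R leR"
  shows "partial_order_on' R leR \<and> dcpo' R leR"
proof -
  obtain R' :: "'u set" and leR' where "is_id_iter m P le R' leR'" "order_iso (ideals R' leR') (\<subseteq>) R leR" using assms by (simp only: is_id_iter.simps(2)) blast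
  then obtain f where f: "iso_fn f (ideals R' leR') (\<subseteq>) R leR" using order_iso_fn by blast
  show ?thesis using iso_po[OF f ideals_po] iso_dcpo[OF f ideals_dcpo] by simp
qed


definition pr :: "'a set \<Rightarrow> ('a \<Rightarrow> 'a \<Rightarrow> bool) \<Rightarrow> 'a \<Rightarrow> 'a set" where
  "pr R le x = {y\<in>R. le y x}"

context
  fixes R :: "'a set" and le :: "'a \<Rightarrow> 'a \<Rightarrow> bool"
  assumes po: "partial_order_on' R le"
begin

lemma refl': "x \<in> R \<Longrightarrow> le x x" using po unfolding partial_order_on'_def by blast
lemma antisym': "x \<in> R \<Longrightarrow> y \<in> R \<Longrightarrow> le x y \<Longrightarrow> le y x \<Longrightarrow> x = y"
  using po unfolding partial_order_on'_def by blast
lemma trans': "x \<in> R \<Longrightarrow> y \<in> R \<Longrightarrow> z \<in> R \<Longrightarrow> le x y \<Longrightarrow> le y z \<Longrightarrow> le x z"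
  using po unfolding partial_order_on'_def by blast

lemma pr_ideal: "x \<in> R \<Longrightarrow> pr R le x \<in> ideals R le"
  unfolding mem_ideals pr_def using refl' trans' by blast

lemma pr_mem: "x \<in> R \<Longrightarrow> x \<in> pr R le x" unfolding pr_def using refl' by blast

lemma pr_le: "x \<in> R \<Longrightarrow> y \<in> R \<Longrightarrow> pr R le x \<subseteq> pr R le y \<longleftrightarrow> le x y"
  unfolding pr_def using refl' trans' by blast

lemma pr_sub_ideal: "I \<in> ideals R le \<Longrightarrow> x \<in> I \<Longrightarrow> pr R le x \<subseteq> I"
  unfolding pr_def mem_ideals by blast

lemma compact_ideals:
  "compact_el (ideals R le) (\<subseteq>) I \<longleftrightarrow> (\<exists>x\<in>R. I = pr R le x)"
proof
  assume c: "compact_el (ideals R le) (\<subseteq>) I"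
  then have I: "I \<in> ideals R le" by (rule compact_el_mem)
  then have IR: "I \<subseteq> R" and Ine: "I \<noteq> {}"
    and Idir: "\<And>x y. x \<in> I \<Longrightarrow> y \<in> I \<Longrightarrow> \<exists>z\<in>I. le x z \<and> le y z"
    unfolding mem_ideals by blast+
  define D where "D = pr R le ` I"
  have D1: "D \<subseteq> ideals R le" unfolding D_def using IR pr_ideal by blast
  have D2: "D \<noteq> {}" unfolding D_def using Ine by blast
  have D3: "up_directed D (\<subseteq>)" unfolding up_directed_def D_def
  proof (intro ballI)
    fix a b assume "a \<in> pr R le ` I" "b \<in> pr R le ` I"
    then obtain x y where xy: "x \<in> I" "y \<in> I" "a = pr R le x" "b = pr R le y" by auto
    then obtain z where z: "z \<in> I" "le x z" "le y z" using Idir by blast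
    have "a \<subseteq> pr R le z" using pr_le[of x z] xy z IR by auto
    moreover have "b \<subseteq> pr R le z" using pr_le[of y z] xy z IR by auto
    ultimately show "\<exists>c\<in>pr R le ` I. a \<subseteq> c \<and> b \<subseteq> c" using z(1) by blast
  qed
  have D4: "is_lub (ideals R le) (\<subseteq>) D I" unfolding is_lub_def
  proof (intro conjI ballI impI)
    show "I \<in> ideals R le" by (rule I)
  next
    fix d assume "d \<in> D" then show "d \<subseteq> I" unfolding D_def using pr_sub_ideal[OF I] by auto
  next
    fix u assume "u \<in> ideals R le" and ub: "\<forall>d\<in>D. d \<subseteq> u"
    show "I \<subseteq> u"
    proof
      fix x assume x: "x \<in> I"
      then have "pr R le x \<subseteq> u" using ub unfolding D_def by blast
      then show "x \<in> u" using pr_mem[of x] x IR by auto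
    qed
  qed
  have "\<exists>y\<in>D. I \<subseteq> y" using c D1 D2 D3 D4 unfolding compact_el_def by auto
  then obtain x where x: "x \<in> I" "I \<subseteq> pr R le x" unfolding D_def by blast
  have "pr R le x \<subseteq> I" using pr_sub_ideal[OF I x(1)] .
  then show "\<exists>x\<in>R. I = pr R le x" using x IR by blast
next
  assume "\<exists>x\<in>R. I = pr R le x"
  then obtain x where x: "x \<in> R" "I = pr R le x" by blast
  show "compact_el (ideals R le) (\<subseteq>) I" unfolding compact_el_def
  proof (intro conjI allI impI)
    show "I \<in> ideals R le" using x pr_ideal by simp
  next
    fix D s assume D: "D \<subseteq> ideals R le \<and> D \<noteq> {} \<and> up_directed D (\<subseteq>)"
      and s: "is_lub (ideals R le) (\<subseteq>) D s \<and> I \<subseteq> s"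
    have U: "\<Union>D \<in> ideals R le" using union_ideal D by blast
    have "\<forall>d\<in>D. d \<subseteq> \<Union>D" by blast
    then have "s \<subseteq> \<Union>D" using s U unfolding is_lub_def by blast
    moreover have "x \<in> s" using s x pr_mem[OF x(1)] by blast
    ultimately obtain d where d: "d \<in> D" "x \<in> d" by blast
    then have "d \<in> ideals R le" using D by blast
    then have "I \<subseteq> d" using pr_sub_ideal d x by blast
    then show "\<exists>y\<in>D. I \<subseteq> y" using d by blast
  qed
qed

lemma iso_pr: "iso_fn (pr R le) R le (kcompact (ideals R le) (\<subseteq>) 1) (\<subseteq>)"
proof -
  have img: "kcompact (ideals R le) (\<subseteq>) 1 = pr R le ` R"
    using compact_ideals by auto
  have "inj_on (pr R le) R" unfolding inj_on_def using pr_le antisym' by (metis order_refl)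
  then show ?thesis unfolding iso_fn_def bij_betw_def using img pr_le by auto
qed

lemma step_concrete:
  assumes d: "dcpo' R le" and a0: "a0 \<in> ideals R le" and nc: "\<not> compact_el (ideals R le) (\<subseteq>) a0"
  shows "\<exists>a1. is_least {c \<in> kcompact (ideals R le) (\<subseteq>) 1. a0 \<subseteq> c} (\<subseteq>) a1 \<and> a0 \<noteq> a1
     \<and> \<not> compact_el (kcompact (ideals R le) (\<subseteq>) 1) (\<subseteq>) a1"
proof -
  have a0R: "a0 \<subseteq> R" using a0 unfolding mem_ideals by blast
  have "up_directed a0 le" "a0 \<noteq> {}" using a0 unfolding ideals_def by auto
  then obtain u where u: "is_lub R le a0 u" using d a0R unfolding dcpo'_def by blast
  have uR: "u \<in> R" using u unfolding is_lub_def by blast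
  have sub: "a0 \<subseteq> pr R le u" using u a0R unfolding is_lub_def pr_def by blast
  have K: "pr R le u \<in> kcompact (ideals R le) (\<subseteq>) 1" using compact_ideals uR pr_ideal by auto
  have least: "is_least {c \<in> kcompact (ideals R le) (\<subseteq>) 1. a0 \<subseteq> c} (\<subseteq>) (pr R le u)"
    unfolding is_least_def
  proof (intro conjI ballI)
    show "pr R le u \<in> {c \<in> kcompact (ideals R le) (\<subseteq>) 1. a0 \<subseteq> c}" using K sub by blast
  next
    fix c assume c: "c \<in> {c \<in> kcompact (ideals R le) (\<subseteq>) 1. a0 \<subseteq> c}"
    then obtain x where x: "x \<in> R" "c = pr R le x" using compact_ideals by auto
    then have "\<forall>d\<in>a0. le d x" using c unfolding pr_def by blast
    then have "le u x" using u x unfolding is_lub_def by blast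
    then show "pr R le u \<subseteq> c" using pr_le uR x by blast
  qed
  have ne: "a0 \<noteq> pr R le u" using nc compact_ideals uR by blast
  have "\<not> compact_el R le u"
  proof
    assume cu: "compact_el R le u"
    have "\<exists>y\<in>a0. le u y" using cu u refl'[OF uR] a0R \<open>up_directed a0 le\<close> \<open>a0 \<noteq> {}\<close>
      unfolding compact_el_def by blast
    then obtain y where y: "y \<in> a0" "le u y" by blast
    then have "y = u" using antisym' uR a0R u unfolding is_lub_def by blast
    then have "pr R le u \<subseteq> a0" using pr_sub_ideal a0 y by blast
    then show False using ne sub by blast
  qed
  then have "\<not> compact_el (kcompact (ideals R le) (\<subseteq>) 1) (\<subseteq>) (pr R le u)"
    using iso_compact[OF iso_pr uR] by simp
  then show ?thesis using least ne by blast
qed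

end


lemma main_gen:
  fixes P :: "'a set" and le :: "'a \<Rightarrow> 'a \<Rightarrow> bool"
    and Q :: "'u set" and leQ :: "'u \<Rightarrow> 'u \<Rightarrow> bool" and a0 :: 'u
  assumes "is_id_iter n P le Q leQ" and "a0 \<in> Q" and "\<not> compact_el Q leQ a0"
  shows "\<exists>a :: nat \<Rightarrow> 'u. a 0 = a0 \<and>
           (\<forall>i\<in>{1..n-1}.
              is_least {c \<in> kcompact Q leQ i. leQ (a (i-1)) c} leQ (a i)
              \<and> a (i-1) \<noteq> a i)"
  using assms
proof (induction n arbitrary: Q leQ a0)
  case 0 then show ?case by (intro exI[of _ "\<lambda>_. a0"]) simp
next
  case (Suc n)
  show ?case
  proof (cases n)
    case 0 then show ?thesis by (intro exI[of _ "\<lambda>_. a0"]) simp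
  next
    case (Suc m)
    obtain R :: "'u set" and leR where R: "is_id_iter n P le R leR" "order_iso (ideals R leR) (\<subseteq>) Q leQ"
      using Suc.prems(1) by (simp only: is_id_iter.simps(2)) blast
    have pd: "partial_order_on' R leR \<and> dcpo' R leR" using R(1) Suc is_id_iter_Suc_props by blast
    obtain g where g: "iso_fn g (ideals R leR) (\<subseteq>) Q leQ" using R(2) order_iso_fn by blast
    define a0' where "a0' = the_inv_into (ideals R leR) g a0"
    have a0': "a0' \<in> ideals R leR" "g a0' = a0"
      unfolding a0'_def using iso_fn_mem[OF iso_fn_inv[OF g] Suc.prems(2)] iso_fn_f_inv[OF g Suc.prems(2)] by auto
    have nc: "\<not> compact_el (ideals R leR) (\<subseteq>) a0'" using iso_compact[OF g a0'(1)] a0' Suc.prems(3) by simp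
    let ?C1 = "kcompact (ideals R leR) (\<subseteq>) 1"
    obtain a1' where a1': "is_least {c \<in> ?C1. a0' \<subseteq> c} (\<subseteq>) a1'" "a0' \<noteq> a1'"
      "\<not> compact_el ?C1 (\<subseteq>) a1'"
      using step_concrete[OF conjunct1[OF pd] conjunct2[OF pd] a0'(1) nc] by blast
    have C1sub: "?C1 \<subseteq> ideals R leR" by (rule kcompact_sub)
    have KQ: "kcompact Q leQ 1 = g ` ?C1" using iso_kcompact[OF g, of 1] by simp
    have gr: "iso_fn g ?C1 (\<subseteq>) (kcompact Q leQ 1) leQ"
      using iso_fn_restrict[OF g C1sub] KQ by simp
    have a1C: "a1' \<in> ?C1" using a1' unfolding is_least_def by blast
    define a1 where "a1 = g a1'"
    have least1: "is_least {c \<in> kcompact Q leQ 1. leQ a0 c} leQ a1"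
      unfolding is_least_def
    proof (intro conjI ballI)
      show "a1 \<in> {c \<in> kcompact Q leQ 1. leQ a0 c}"
        using a1' a1C KQ a0' iso_fn_le[OF g] C1sub unfolding a1_def is_least_def by blast
    next
      fix c assume "c \<in> {c \<in> kcompact Q leQ 1. leQ a0 c}"
      then have cK: "c \<in> g ` ?C1" "leQ a0 c" unfolding KQ by blast+
      then obtain c' where c'': "c' \<in> ?C1" "c = g c'" by blast
      then have c': "c' \<in> ?C1" "c = g c'" "leQ (g a0') (g c')" using cK a0' by simp_all
      then have "a0' \<subseteq> c'" using iso_fn_le[OF g] a0'(1) C1sub by blast
      then have "a1' \<subseteq> c'" using a1' c' unfolding is_least_def by blast
      then show "leQ a1 c" using iso_fn_le[OF g] a1C c' C1sub unfolding a1_def by blast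
    qed
    have ne1: "a0 \<noteq> a1" using a1'(2) a0' iso_fn_inj[OF g] a1C C1sub unfolding a1_def by blast
    have nc1: "\<not> compact_el (kcompact Q leQ 1) leQ a1"
      using iso_compact[OF gr a1C] a1'(3) unfolding a1_def by simp
    have a1K: "a1 \<in> kcompact Q leQ 1" using iso_fn_mem[OF gr a1C] unfolding a1_def .
    have "iso_fn (g \<circ> pr R leR) R leR (kcompact Q leQ 1) leQ"
      using iso_fn_comp[OF iso_pr[OF conjunct1[OF pd]] gr] .
    then have "is_id_iter n P le (kcompact Q leQ 1) leQ"
      using is_id_iter_iso[OF R(1)] order_iso_fn by blast
    from Suc.IH[OF this a1K nc1] obtain b where b: "b 0 = a1"
      "\<forall>i\<in>{1..n-1}. is_least {c \<in> kcompact (kcompact Q leQ 1) leQ i. leQ (b (i-1)) c} leQ (b i)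
              \<and> b (i-1) \<noteq> b i" by blast
    define a where "a i = (if i = 0 then a0 else b (i - 1))" for i
    have "\<forall>i\<in>{1..Suc n-1}. is_least {c \<in> kcompact Q leQ i. leQ (a (i-1)) c} leQ (a i)
              \<and> a (i-1) \<noteq> a i"
    proof
      fix i assume i: "i \<in> {1..Suc n - 1}"
      show "is_least {c \<in> kcompact Q leQ i. leQ (a (i-1)) c} leQ (a i) \<and> a (i-1) \<noteq> a i"
      proof (cases "i = 1")
        case True then show ?thesis using least1 ne1 b(1) unfolding a_def by simp
      next
        case False
        then obtain j where j: "i = Suc j" "j \<in> {1..n-1}" using i by (cases i) auto
        have "kcompact Q leQ i = kcompact (kcompact Q leQ 1) leQ j" using j kcompact_shift by simp
        moreover have "a (i-1) = b (j-1)" "a i = b j" using j unfolding a_def by auto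
        ultimately show ?thesis using b(2) j by simp
      qed
    qed
    moreover have "a 0 = a0" by (simp add: a_def)
    ultimately show ?thesis by blast
  qed
qed

theorem lemma4p1:
  fixes P :: "'a set" and le :: "'a \<Rightarrow> 'a \<Rightarrow> bool"
    and Q :: "'u set" and leQ :: "'u \<Rightarrow> 'u \<Rightarrow> bool"
    and n :: nat and a0 :: 'u
  assumes "partial_order_on' P le"
    and "n > 1"
    and "is_id_iter n P le Q leQ"
    and "a0 \<in> Q" and "\<not> compact_el Q leQ a0"
  shows "\<exists>a :: nat \<Rightarrow> 'u. a 0 = a0 \<and>
           (\<forall>i\<in>{1..n-1}.
              is_least {c \<in> kcompact Q leQ i. leQ (a (i-1)) c} leQ (a i)
              \<and> a (i-1) \<noteq> a i)"
  using main_gen[OF assms(3,4,5)] .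

end
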